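(* Under Assumption M (together with the decomposition of Assumption D), with $S_{l,r}(\beta_0)$ the Rademacher representation of the score, $E[S_{l,r}(\beta_0)\mid\mathcal J]=0$ for each $l$, and the conditional variance satisfies $$\Omega_{l_1l_2}(\beta_0):=E\big[n\,S_{l_1,r}(\beta_0)S_{l_2,r}(\beta_0)\mid\mathcal J\big]=\Omega^L_{l_1l_2}(\beta_0)+\Omega^H_{l_1l_2}(\beta_0),$$ where $\Omega^L=\Omega^{L,z}+\Omega^{L,a}+\Omega^{L,u}$ with $\Omega^{L,z}_{l_1l_2}=\frac1n\bar z_{(l_1)}'\big[(I-D_P)V(I-D_P)+D_PD_V(I-2D_P)+V\odot P\odot P\big]\bar z_{(l_2)}$, $\Omega^{L,a}_{l_1l_2}=\frac1n a_{(l_1)}'(D_P-P\odot P)a_{(l_2)}$, $\Omega^{L,u}_{l_1l_2}=\frac1n\operatorname{tr}\big(D_{\Sigma^U(l_1,l_2)}D_V(I-D_P)\big)$, and $\Omega^H=\Omega^{H,z}+\Omega^{H,a}+\Omega^{H,u}$ with $\Omega^{H,z}_{l_1l_2}=\frac1n\bar z_{(l_1)}'(V\odot W)\bar z_{(l_2)}$, $\Omega^{H,a}_{l_1l_2}=-\frac2n a_{(l_1)}'(D_P-P\odot P)^2a_{(l_2)}$, $\Omega^{H,u}_{l_1l_2}=-\frac2n\operatorname{tr}\big(D_{\Sigma^U(l_1,l_2)}\big[D_VD_P(I-2D_P)+\big((VD_\varepsilon\odot VD_\varepsilon)(P\odot P)\big)\odot I\big]\big)$, where $V\odot W$ is the $n\times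 n$ matrix with entries, for $i_1\ne i_2$, $[V\odot W]_{i_1i_2}=V_{i_1i_2}\big[(P_{i_1i_1}P_{i_2i_2}+P_{i_1i_2}^2)(3-4P_{i_1i_1}-4P_{i_2i_2})-2P_{i_1i_1}-2P_{i_2i_2}+2(P_{i_1i_1}+P_{i_2i_2})^2\big]$ and diagonal entries $[V\odot W]_{ii}=-2V_{ii}P_{ii}(1-2P_{ii})-2\sum_{j=1}^nV_{ij}^2\varepsilon_j^2P_{ij}^2$.
   Context: Notation: for a vector $v$, $D_v$ is the diagonal matrix with $v$ on its diagonal; for a square matrix $A$, $D_A=A\odot I$ ($\odot$ the Hadamard product); $\iota$ the vector of ones; $D_\varepsilon^2=D_\varepsilon D_\varepsilon$. Linear IV model: $y_i=x_i'\beta_0+\varepsilon_i$, $x_i=\Pi'z_i+\eta_i$, $i=1,\dots,n$, $x_i\in\mathbb R^p$, $z_i\in\mathbb R^k$; $Z$ has rows $z_i'$, $x_{(l)}$ is the $l$th column of the matrix $X$ with rows $x_i'$, $\bar Z=Z\Pi$ with columns $\bar z_{(l)}$, $V=Z(Z'D_\varepsilon^2Z)^{-1}Z'$, $P=D_\varepsilon VD_\varepsilon$, $M=I-P$. The score at $\beta_0$ is $S_l(\beta_0)=-\frac1nx_{(l)}'(I-D_{P\iota})V\varepsilon$. Assumption M: (a) conditional on $Z$, $\{(\varepsilon_i,\eta_i')\}$ are independent, mean zero, with conditional covariance $\Sigma_i=\begin{pmatrix}\sigma_i^2&\sigma_{12i}'\\\sigma_{12i}&\Sigma_{22i}\end{pmatrix}$;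 (b) eigenvalues of $\Sigma_i$ in $[C^{-1},C]$ a.s.; (c) $E[\varepsilon_i^4\mid Z]\le C$, $E[\|\eta_i\|^4\mid Z]\le C$ a.s.; (d) conditional on $Z$, $\varepsilon\overset d=D_r\varepsilon$ with $r=(r_1,\dots,r_n)'$ independent Rademacher variables independent of everything else. Assumption D: $\eta_i=\varepsilon_ia_i+u_i$, $a_i=\sigma_{12i}/\sigma_i^2$, with $\{u_i\}$ and $\{\varepsilon_i\}$ mutually independent given $Z$. Write $a_{(l)}=(a_{1l},\dots,a_{nl})'$, $\bar x_{(l)}=\bar z_{(l)}+u_{(l)}$ (so $x_{(l)}=\bar x_{(l)}+D_\varepsilon a_{(l)}$), and $D_{\Sigma^U(l_1,l_2)}$ the diagonal matrix with $i$th entry $\operatorname{Cov}(u_{il_1},u_{il_2}\mid Z)$. Rademacher representation: $S_{l,r}(\beta_0)=-\frac1n\bar x_{(l)}'VD_\varepsilon r-\frac1n r'D_{a_{(l)}}Pr+\frac1n r'PD_{a_{(l)}}Pr+\frac1n r'PD_rD_{\bar x_{(l)}}VD_\varepsilon r$, which conditionally on $Z$ has the same distribution as $S_l(\beta_0)$. $\mathcal J=\{\varepsilon_i,z_i\}_{i=1}^n$; conditional expectations given $\mathcal J$ are over $r$ and $\{u_i\}$. *)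

theory Defs
  imports "HOL-Probability.Probability"
begin

definition diagm :: "real^'n \<Rightarrow> real^'n^'n" where
  "diagm v = (\<chi> i j. if i = j then v $ i else 0)"

definition hadamard :: "real^'m^'n \<Rightarrow> real^'m^'n \<Rightarrow> real^'m^'n" (infixl "\<odot>" 71) where
  "A \<odot> B = (\<chi> i j. A $ i $ j * B $ i $ j)"

definition diagpart :: "real^'n^'n \<Rightarrow> real^'n^'n" where
  "diagpart A = A \<odot> mat 1"

definition rademacher_vec :: "(real^'n::finite) pmf" where
  "rademacher_vec = map_pmf vec_lambda (Pi_pmf UNIV 0 (\<lambda>_. pmf_of_set {-1, 1}))"

definition Vmat :: "real^'n \<Rightarrow> real^'k^'n \<Rightarrow> real^'n^'n" where
  "Vmat eps Z = Z ** matrix_inv (transpose Z ** diagm eps ** diagm eps ** Z) ** transpose Z"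

definition Pmat :: "real^'n \<Rightarrow> real^'k^'n \<Rightarrow> real^'n^'n" where
  "Pmat eps Z = diagm eps ** Vmat eps Z ** diagm eps"

(* Rademacher representation S_{l,r}(beta_0), with xbar_(l) = xb, a_(l) = al *)
definition S_rad :: "real^'n \<Rightarrow> real^'k^'n \<Rightarrow> real^'n \<Rightarrow> real^'n \<Rightarrow> real^'n \<Rightarrow> real" where
  "S_rad eps Z xb al r =
     (let n = real CARD('n); V = Vmat eps Z; P = Pmat eps Z; De = diagm eps in
      - (1/n) * (xb \<bullet> (V *v (De *v r)))
      - (1/n) * (r \<bullet> ((diagm al ** P) *v r))
      + (1/n) * (r \<bullet> ((P ** diagm al ** P) *v r))
      + (1/n) * (r \<bullet> ((P ** diagm r ** diagm xb ** V ** De) *v r)))"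

definition VW :: "real^'n \<Rightarrow> real^'k^'n \<Rightarrow> real^'n^'n" where
  "VW eps Z = (let V = Vmat eps Z; P = Pmat eps Z in
     (\<chi> i1 i2. if i1 \<noteq> i2 then
        V$i1$i2 * ((P$i1$i1 * P$i2$i2 + (P$i1$i2)^2) * (3 - 4 * P$i1$i1 - 4 * P$i2$i2)
                   - 2 * P$i1$i1 - 2 * P$i2$i2 + 2 * (P$i1$i1 + P$i2$i2)^2)
      else - 2 * V$i1$i1 * P$i1$i1 * (1 - 2 * P$i1$i1)
           - 2 * (\<Sum>j\<in>UNIV. (V$i1$j)^2 * (eps$j)^2 * (P$i1$j)^2)))"

definition OmegaLz :: "real^'n \<Rightarrow> real^'k^'n \<Rightarrow> real^'n \<Rightarrow> real^'n \<Rightarrow> real" where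
  "OmegaLz eps Z z1 z2 = (let n = real CARD('n); V = Vmat eps Z; P = Pmat eps Z;
      DP = diagpart P; DV = diagpart V; I = (mat 1 :: real^'n^'n) in
     (1/n) * (z1 \<bullet> (((I - DP) ** V ** (I - DP) + DP ** DV ** (I - 2 *\<^sub>R DP) + V \<odot> P \<odot> P) *v z2)))"

definition OmegaLa :: "real^'n \<Rightarrow> real^'k^'n \<Rightarrow> real^'n \<Rightarrow> real^'n \<Rightarrow> real" where
  "OmegaLa eps Z a1 a2 = (let n = real CARD('n); P = Pmat eps Z in
     (1/n) * (a1 \<bullet> ((diagpart P - P \<odot> P) *v a2)))"

(* SU = vector with i-th entry Cov(u_{i l1}, u_{i l2} | Z) *)
definition OmegaLu :: "real^'n \<Rightarrow> real^'k^'n \<Rightarrow> real^'n \<Rightarrow> real" where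
  "OmegaLu eps Z SU = (let n = real CARD('n); V = Vmat eps Z; P = Pmat eps Z in
     (1/n) * trace (diagm SU ** diagpart V ** (mat 1 - diagpart P)))"

definition OmegaHz :: "real^'n \<Rightarrow> real^'k^'n \<Rightarrow> real^'n \<Rightarrow> real^'n \<Rightarrow> real" where
  "OmegaHz eps Z z1 z2 = (1 / real CARD('n)) * (z1 \<bullet> (VW eps Z *v z2))"

definition OmegaHa :: "real^'n \<Rightarrow> real^'k^'n \<Rightarrow> real^'n \<Rightarrow> real^'n \<Rightarrow> real" where
  "OmegaHa eps Z a1 a2 = (let n = real CARD('n); P = Pmat eps Z; A = diagpart P - P \<odot> P in
     - (2/n) * (a1 \<bullet> ((A ** A) *v a2)))"

definition OmegaHu :: "real^'n \<Rightarrow> real^'k^'n \<Rightarrow> real^'n \<Rightarrow> real" where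
  "OmegaHu eps Z SU = (let n = real CARD('n); V = Vmat eps Z; P = Pmat eps Z;
      DP = diagpart P; DV = diagpart V; VD = V ** diagm eps in
     - (2/n) * trace (diagm SU ** (DV ** DP ** (mat 1 - 2 *\<^sub>R DP)
                                   + ((VD \<odot> VD) ** (P \<odot> P)) \<odot> mat 1)))"

end

theory Submission
  imports Defs
begin


definition SV :: "(real^'n) set" where "SV = {s. \<forall>i. s$i \<in> {-1,1}}"

lemma SV_eq: "SV = vec_lambda ` PiE_dflt UNIV 0 (\<lambda>_. {-1::real,1})"
  unfolding SV_def PiE_dflt_def
  apply (auto simp: image_iff)
  apply (rule_tac x="vec_nth x" in exI) by auto

lemma SV_finite: "finite (SV :: (real^'n::finite) set)"
  unfolding SV_eq by (intro finite_imageI finite_PiE_dflt) auto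

lemma SV_ne: "(SV :: (real^'n::finite) set) \<noteq> {}"
proof -
  have "(\<chi> i. 1) \<in> (SV :: (real^'n::finite) set)" by (simp add: SV_def)
  thus ?thesis by auto
qed

definition RE :: "(real^'n \<Rightarrow> real) \<Rightarrow> real" where
  "RE f = sum f SV / card (SV :: (real^'n) set)"

lemma rad_pmf: "rademacher_vec = pmf_of_set (SV :: (real^'n::finite) set)"
  unfolding rademacher_vec_def SV_eq
  by (subst Pi_pmf_of_set) (auto intro!: map_pmf_of_set_inj inj_onI simp: vec_eq_iff)

lemma rad_E: "measure_pmf.expectation rademacher_vec f = RE f"
  unfolding rad_pmf RE_def by (rule integral_pmf_of_set[OF SV_ne SV_finite])

lemma RE_cong: "(\<And>s. s \<in> SV \<Longrightarrow> f s = g s) \<Longrightarrow> RE f = RE g"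
  unfolding RE_def by (simp cong: sum.cong)
lemma RE_add: "RE (\<lambda>s. f s + g s) = RE f + RE g"
  unfolding RE_def by (simp add: sum.distrib add_divide_distrib)
lemma RE_diff: "RE (\<lambda>s. f s - g s) = RE f - RE g"
  unfolding RE_def by (simp add: sum_subtractf diff_divide_distrib)
lemma RE_cmult: "RE (\<lambda>s. c * f s) = c * RE f"
  unfolding RE_def by (simp add: sum_distrib_left)
lemma RE_sum: "finite A \<Longrightarrow> RE (\<lambda>s. \<Sum>i\<in>A. f i s) = (\<Sum>i\<in>A. RE (f i))"
  unfolding RE_def by (subst sum.swap) (simp add: sum_divide_distrib)
lemma RE_const: "RE (\<lambda>s::real^'n. c) = (c::real)"
proof -
  have "card (SV :: (real^'n) set) \<noteq> 0" using SV_finite SV_ne by (simp add: card_eq_0_iff)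
  thus ?thesis unfolding RE_def by simp
qed

definition fl :: "'n \<Rightarrow> real^'n \<Rightarrow> real^'n" where
  "fl a s = (\<chi> i. if i = a then - s$i else s$i)"

lemma fl_SV: "s \<in> SV \<Longrightarrow> fl a s \<in> SV" by (auto simp: SV_def fl_def)
lemma fl_fl: "fl a (fl a s) = s" by (simp add: fl_def vec_eq_iff)

lemma RE_flip: "RE (\<lambda>s. f (fl a s)) = RE f"
  unfolding RE_def
  by (rule arg_cong[where f="\<lambda>x. x / _"], rule sum.reindex_bij_witness[of _ "fl a" "fl a"])
     (auto simp: fl_SV fl_fl)

lemma RE_odd: assumes "\<And>s. s \<in> SV \<Longrightarrow> f (fl a s) = - f s" shows "RE f = 0"
proof -
  have "RE f = RE (\<lambda>s. f (fl a s))" by (rule RE_flip[symmetric])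
  also have "\<dots> = RE (\<lambda>s. - f s)" by (rule RE_cong) (simp add: assms)
  also have "\<dots> = - RE f" using RE_cmult[of "-1" f] by simp
  finally show ?thesis by simp
qed

lemma SV_sq: "s \<in> SV \<Longrightarrow> s$i * s$i = 1" 
proof -
  assume "s \<in> SV" hence "s$i = -1 \<or> s$i = 1" by (auto simp: SV_def)
  thus ?thesis by auto
qed

lemma m1: "RE (\<lambda>s. s$i) = 0"
  by (rule RE_odd[of _ i]) (simp add: fl_def)

lemma m2: "RE (\<lambda>s. s$i * s$j) = (if i = j then 1 else 0)"
proof (cases "i = j")
  case True thus ?thesis by (simp add: RE_cong[where g="\<lambda>s. 1"] SV_sq RE_const)
next
  case False
  have "RE (\<lambda>s. s$i * s$j) = 0" by (rule RE_odd[of _ i]) (use False in \<open>simp add: fl_def\<close>)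
  thus ?thesis using False by simp
qed

definition dd :: "'a \<Rightarrow> 'a \<Rightarrow> real" where "dd i j = (if i = j then 1 else 0)"

lemma m2': "RE (\<lambda>s. s$i * s$j) = dd i j" unfolding dd_def by (rule m2)

lemma RE_sq: "RE (\<lambda>s. s$i * s$i * f s) = RE f"
  by (rule RE_cong) (simp add: SV_sq)

lemma m4: "RE (\<lambda>s. s$i1 * s$i2 * s$i3 * s$i4) =
   dd i1 i2 * dd i3 i4 + dd i1 i3 * dd i2 i4 + dd i1 i4 * dd i2 i3
   - 2 * (dd i1 i2 * dd i1 i3 * dd i1 i4)"
proof -
  consider "i1 = i2" | "i1 = i3" | "i1 = i4" | "i1 \<noteq> i2 \<and> i1 \<noteq> i3 \<and> i1 \<noteq> i4" by blast
  thus ?thesis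
  proof cases
    case 1
    have "RE (\<lambda>s. s$i1 * s$i2 * s$i3 * s$i4) = RE (\<lambda>s. s$i3 * s$i4)"
      using 1 RE_sq[of i1 "\<lambda>s. s$i3 * s$i4"] by (simp add: mult.assoc)
    thus ?thesis using 1 by (simp add: m2' dd_def)
  next
    case 2
    have "RE (\<lambda>s. s$i1 * s$i2 * s$i3 * s$i4) = RE (\<lambda>s. s$i2 * s$i4)"
      using 2 RE_sq[of i1 "\<lambda>s. s$i2 * s$i4"] by (simp add: ac_simps)
    thus ?thesis using 2 by (simp add: m2' dd_def)
  next
    case 3
    have "RE (\<lambda>s. s$i1 * s$i2 * s$i3 * s$i4) = RE (\<lambda>s. s$i2 * s$i3)"
      using 3 RE_sq[of i1 "\<lambda>s. s$i2 * s$i3"] by (simp add: ac_simps)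
    thus ?thesis using 3 by (simp add: m2' dd_def)
  next
    case 4
    have "RE (\<lambda>s. s$i1 * s$i2 * s$i3 * s$i4) = 0"
      by (rule RE_odd[of _ i1]) (use 4 in \<open>auto simp: fl_def\<close>)
    thus ?thesis using 4 by (simp add: dd_def)
  qed
qed

lemma inner_sum: "(a::real^'n) \<bullet> s = (\<Sum>i\<in>UNIV. a$i * s$i)" by (simp add: inner_vec_def)

lemma exp4: "(a * b * c * d) * (s * t * u * v) = (a * s) * (b * t) * (c * u) * (d * (v::real))" by (simp add: ac_simps)

lemma mi1: "x * (if P then y else 0) = (if P then x * y else (0::real))" by simp
lemma mi2: "(if P then y else 0) * x = (if P then y * x else (0::real))" by simp
lemma si: "(\<Sum>j\<in>A. if P then f j else 0) = (if P then (\<Sum>j\<in>A. f j) else (0::real))" by simp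

definition q4 :: "real^'n \<Rightarrow> real^'n \<Rightarrow> real^'n \<Rightarrow> real^'n \<Rightarrow> real" where
  "q4 a b c d = (\<Sum>i\<in>UNIV. a$i * b$i * c$i * d$i)"

lemma M4: "RE (\<lambda>s. (a \<bullet> s) * (b \<bullet> s) * (c \<bullet> s) * (d \<bullet> s)) =
   (a \<bullet> b) * (c \<bullet> d) + (a \<bullet> c) * (b \<bullet> d) + (a \<bullet> d) * (b \<bullet> c) - 2 * q4 a b c d"
proof -
  have "RE (\<lambda>s. (a \<bullet> s) * (b \<bullet> s) * (c \<bullet> s) * (d \<bullet> s)) =
     RE (\<lambda>s. \<Sum>i1\<in>UNIV. \<Sum>i2\<in>UNIV. \<Sum>i3\<in>UNIV. \<Sum>i4\<in>UNIV. (a$i1*b$i2*c$i3*d$i4) * (s$i1 * s$i2 * s$i3 * s$i4))"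
    by (rule arg_cong[where f=RE], rule ext, simp only: exp4, simp only: inner_sum sum_distrib_left[symmetric] sum_distrib_right[symmetric])
  also have "\<dots> = (\<Sum>i1\<in>UNIV. \<Sum>i2\<in>UNIV. \<Sum>i3\<in>UNIV. \<Sum>i4\<in>UNIV. (a$i1*b$i2*c$i3*d$i4) *
     (dd i1 i2 * dd i3 i4 + dd i1 i3 * dd i2 i4 + dd i1 i4 * dd i2 i3 - 2 * (dd i1 i2 * dd i1 i3 * dd i1 i4)))"
    by (simp add: RE_sum RE_cmult m4)
  also have "\<dots> = (\<Sum>i1\<in>UNIV. \<Sum>i2\<in>UNIV. a$i1*b$i1*c$i2*d$i2) + (\<Sum>i1\<in>UNIV. \<Sum>i2\<in>UNIV. a$i1*c$i1*b$i2*d$i2)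
     + (\<Sum>i1\<in>UNIV. \<Sum>i2\<in>UNIV. a$i1*d$i1*b$i2*c$i2) - 2 * (\<Sum>i\<in>UNIV. a$i*b$i*c$i*d$i)"
    unfolding dd_def
    by (simp add: mi1 mi2 si sum.distrib sum_subtractf sum_distrib_left algebra_simps)
  also have "\<dots> = (a \<bullet> b) * (c \<bullet> d) + (a \<bullet> c) * (b \<bullet> d) + (a \<bullet> d) * (b \<bullet> c) - 2 * q4 a b c d"
    by (simp only: inner_sum q4_def sum_product mult.assoc)
  finally show ?thesis .
qed

definition F6 :: "'a \<Rightarrow> 'a \<Rightarrow> 'a \<Rightarrow> 'a \<Rightarrow> 'a \<Rightarrow> 'a \<Rightarrow> real" where
  "F6 i1 i2 i3 i4 i5 i6 = (dd i1 i2*dd i3 i4*dd i5 i6 + dd i1 i2*dd i3 i5*dd i4 i6 + dd i1 i2*dd i3 i6*dd i4 i5 + dd i1 i3*dd i2 i4*dd i5 i6 + dd i1 i3*dd i2 i5*dd i4 i6 + dd i1 i3*dd i2 i6*dd i4 i5 + dd i1 i4*dd i2 i3*dd i5 i6 + dd i1 i4*dd i2 i5*dd i3 i6 + dd i1 i4*dd i2 i6*dd i3 i5 + dd i1 i5*dd i2 i3*dd i4 i6 + dd i1 i5*dd i2 i4*dd i3 i6 + dd i1 i5*dd i2 i6*dd i3 i4 + dd i1 i6*dd i2 i3*dd i4 i5 + dd i1 i6*dd i2 i4*dd i3 i5 + dd i1 i6*dd i2 i5*dd i3 i4) - 2 * (dd i1 i2 * dd i3 i4 * dd i3 i5 * dd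 i3 i6 + dd i1 i3 * dd i2 i4 * dd i2 i5 * dd i2 i6 + dd i1 i4 * dd i2 i3 * dd i2 i5 * dd i2 i6 + dd i1 i5 * dd i2 i3 * dd i2 i4 * dd i2 i6 + dd i1 i6 * dd i2 i3 * dd i2 i4 * dd i2 i5 + dd i2 i3 * dd i1 i4 * dd i1 i5 * dd i1 i6 + dd i2 i4 * dd i1 i3 * dd i1 i5 * dd i1 i6 + dd i2 i5 * dd i1 i3 * dd i1 i4 * dd i1 i6 + dd i2 i6 * dd i1 i3 * dd i1 i4 * dd i1 i5 + dd i3 i4 * dd i1 i2 * dd i1 i5 * dd i1 i6 + dd i3 i5 * dd i1 i2 * dd i1 i4 * dd i1 i6 + dd i3 i6 * dd i1 i2 * dd i1 i4 * dd i1 i5 + dd i4 i5 * dd i1 i2 * dd i1 i3 * dd i1 i6 + dd i4 i6 * dd i1 i2 * dd i1 i3 * dd i1 i5 + dd i5 i6 * dd i1 i2 * dd i1 i3 * dd i1 i4) + 16 * (dd i1 i2 * dd i1 i3 * dd i1 i4 * dd i1 i5 * dd i1 i6)"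

lemma F6_12: "F6 i1 i1 i3 i4 i5 i6 = dd i3 i4 * dd i5 i6 + dd i3 i5 * dd i4 i6 + dd i3 i6 * dd i4 i5 - 2 * (dd i3 i4 * dd i3 i5 * dd i3 i6)"
  unfolding F6_def dd_def by auto

lemma F6_13: "F6 i1 i2 i1 i4 i5 i6 = dd i2 i4 * dd i5 i6 + dd i2 i5 * dd i4 i6 + dd i2 i6 * dd i4 i5 - 2 * (dd i2 i4 * dd i2 i5 * dd i2 i6)"
  unfolding F6_def dd_def by auto

lemma F6_14: "F6 i1 i2 i3 i1 i5 i6 = dd i2 i3 * dd i5 i6 + dd i2 i5 * dd i3 i6 + dd i2 i6 * dd i3 i5 - 2 * (dd i2 i3 * dd i2 i5 * dd i2 i6)"
  unfolding F6_def dd_def by auto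

lemma F6_15: "F6 i1 i2 i3 i4 i1 i6 = dd i2 i3 * dd i4 i6 + dd i2 i4 * dd i3 i6 + dd i2 i6 * dd i3 i4 - 2 * (dd i2 i3 * dd i2 i4 * dd i2 i6)"
  unfolding F6_def dd_def by auto

lemma F6_16: "F6 i1 i2 i3 i4 i5 i1 = dd i2 i3 * dd i4 i5 + dd i2 i4 * dd i3 i5 + dd i2 i5 * dd i3 i4 - 2 * (dd i2 i3 * dd i2 i4 * dd i2 i5)"
  unfolding F6_def dd_def by auto

lemma m6: "RE (\<lambda>s. s$i1 * s$i2 * s$i3 * s$i4 * s$i5 * s$i6) = F6 i1 i2 i3 i4 i5 i6"
proof -
  consider "i1 = i2" | "i1 = i3" | "i1 = i4" | "i1 = i5" | "i1 = i6" | "i1 \<noteq> i2 \<and> i1 \<noteq> i3 \<and> i1 \<noteq> i4 \<and> i1 \<noteq> i5 \<and> i1 \<noteq> i6" by blast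
  thus ?thesis
  proof cases
    case 1
    have "RE (\<lambda>s. s$i1 * s$i2 * s$i3 * s$i4 * s$i5 * s$i6) = RE (\<lambda>s. s$i3 * s$i4 * s$i5 * s$i6)"
      using 1 RE_sq[of i1 "\<lambda>s. s$i3 * s$i4 * s$i5 * s$i6"] by (simp add: ac_simps)
    thus ?thesis using 1 F6_12[of i1 i3 i4 i5 i6] by (simp add: m4)
  next
    case 2
    have "RE (\<lambda>s. s$i1 * s$i2 * s$i3 * s$i4 * s$i5 * s$i6) = RE (\<lambda>s. s$i2 * s$i4 * s$i5 * s$i6)"
      using 2 RE_sq[of i1 "\<lambda>s. s$i2 * s$i4 * s$i5 * s$i6"] by (simp add: ac_simps)
    thus ?thesis using 2 F6_13[of i1 i2 i4 i5 i6] by (simp add: m4)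
  next
    case 3
    have "RE (\<lambda>s. s$i1 * s$i2 * s$i3 * s$i4 * s$i5 * s$i6) = RE (\<lambda>s. s$i2 * s$i3 * s$i5 * s$i6)"
      using 3 RE_sq[of i1 "\<lambda>s. s$i2 * s$i3 * s$i5 * s$i6"] by (simp add: ac_simps)
    thus ?thesis using 3 F6_14[of i1 i2 i3 i5 i6] by (simp add: m4)
  next
    case 4
    have "RE (\<lambda>s. s$i1 * s$i2 * s$i3 * s$i4 * s$i5 * s$i6) = RE (\<lambda>s. s$i2 * s$i3 * s$i4 * s$i6)"
      using 4 RE_sq[of i1 "\<lambda>s. s$i2 * s$i3 * s$i4 * s$i6"] by (simp add: ac_simps)
    thus ?thesis using 4 F6_15[of i1 i2 i3 i4 i6] by (simp add: m4)
  next
    case 5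
    have "RE (\<lambda>s. s$i1 * s$i2 * s$i3 * s$i4 * s$i5 * s$i6) = RE (\<lambda>s. s$i2 * s$i3 * s$i4 * s$i5)"
      using 5 RE_sq[of i1 "\<lambda>s. s$i2 * s$i3 * s$i4 * s$i5"] by (simp add: ac_simps)
    thus ?thesis using 5 F6_16[of i1 i2 i3 i4 i5] by (simp add: m4)
  next
    case 6
    have "RE (\<lambda>s. s$i1 * s$i2 * s$i3 * s$i4 * s$i5 * s$i6) = 0"
      by (rule RE_odd[of _ i1]) (use 6 in \<open>auto simp: fl_def\<close>)
    thus ?thesis using 6 by (simp add: F6_def dd_def)
  qed
qed

definition q6 :: "real^'n \<Rightarrow> real^'n \<Rightarrow> real^'n \<Rightarrow> real^'n \<Rightarrow> real^'n \<Rightarrow> real^'n \<Rightarrow> real" where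
  "q6 a b c d e f = (\<Sum>i\<in>UNIV. a$i * b$i * c$i * d$i * e$i * f$i)"

lemma exp6: "(a * b * c * d * e * f) * (s * t * u * v * w * x) = (a * s) * (b * t) * (c * u) * (d * v) * (e * w) * (f * (x::real))" by (simp add: ac_simps)

lemma prod3: "(\<Sum>i\<in>A. f i) * (\<Sum>j\<in>B. g j) * (\<Sum>k\<in>C. h k) = (\<Sum>i\<in>A. \<Sum>j\<in>B. \<Sum>k\<in>C. f i * g j * (h k::real))"
proof -
  have "(\<Sum>i\<in>A. \<Sum>j\<in>B. \<Sum>k\<in>C. f i * g j * h k) = (\<Sum>i\<in>A. \<Sum>j\<in>B. f i * g j * (\<Sum>k\<in>C. h k))"
    by (simp add: sum_distrib_left)
  also have "\<dots> = (\<Sum>i\<in>A. \<Sum>j\<in>B. f i * g j) * (\<Sum>k\<in>C. h k)"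
    by (simp add: sum_distrib_right)
  also have "\<dots> = (\<Sum>i\<in>A. f i) * (\<Sum>j\<in>B. g j) * (\<Sum>k\<in>C. h k)"
    by (simp add: sum_product)
  finally show ?thesis by simp
qed

lemma M6: "RE (\<lambda>s. (a1 \<bullet> s) * (a2 \<bullet> s) * (a3 \<bullet> s) * (a4 \<bullet> s) * (a5 \<bullet> s) * (a6 \<bullet> s)) = ((a1 \<bullet> a2) * (a3 \<bullet> a4) * (a5 \<bullet> a6) + (a1 \<bullet> a2) * (a3 \<bullet> a5) * (a4 \<bullet> a6) + (a1 \<bullet> a2) * (a3 \<bullet> a6) * (a4 \<bullet> a5) + (a1 \<bullet> a3) * (a2 \<bullet> a4) * (a5 \<bullet> a6) + (a1 \<bullet> a3) * (a2 \<bullet> a5) * (a4 \<bullet> a6) + (a1 \<bullet> a3) * (a2 \<bullet> a6) * (a4 \<bullet> a5) + (a1 \<bullet> a4) * (a2 \<bullet> a3) * (a5 \<bullet> a6) + (a1 \<bullet> a4) * (a2 \<bullet> a5) * (a3 \<bullet> a6) + (a1 \<bullet> a4) * (a2 \<bullet> a6) * (a3 \<bullet> a5) + (a1 \<bullet> a5) * (a2 \<bullet> a3) * (a4 \<bullet> a6) + (a1 \<bullet> a5) * (a2 \<bullet> a4) * (a3 \<bullet> a6) + (a1 \<bullet> a5) * (a2 \<bullet> a6) * (a3 \<bullet> a4) + (a1 \<bullet> a6) * (a2 \<bullet> a3) * (a4 \<bullet> a5) + (a1 \<bullet> a6) * (a2 \<bullet> a4) * (a3 \<bullet> a5) + (a1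 \<bullet> a6) * (a2 \<bullet> a5) * (a3 \<bullet> a4)) - 2 * ((a1 \<bullet> a2) * q4 a3 a4 a5 a6 + (a1 \<bullet> a3) * q4 a2 a4 a5 a6 + (a1 \<bullet> a4) * q4 a2 a3 a5 a6 + (a1 \<bullet> a5) * q4 a2 a3 a4 a6 + (a1 \<bullet> a6) * q4 a2 a3 a4 a5 + q4 a1 a4 a5 a6 * (a2 \<bullet> a3) + q4 a1 a3 a5 a6 * (a2 \<bullet> a4) + q4 a1 a3 a4 a6 * (a2 \<bullet> a5) + q4 a1 a3 a4 a5 * (a2 \<bullet> a6) + q4 a1 a2 a5 a6 * (a3 \<bullet> a4) + q4 a1 a2 a4 a6 * (a3 \<bullet> a5) + q4 a1 a2 a4 a5 * (a3 \<bullet> a6) + q4 a1 a2 a3 a6 * (a4 \<bullet> a5) + q4 a1 a2 a3 a5 * (a4 \<bullet> a6) + q4 a1 a2 a3 a4 * (a5 \<bullet> a6)) + 16 * q6 a1 a2 a3 a4 a5 a6"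
proof -
  have "RE (\<lambda>s. (a1 \<bullet> s) * (a2 \<bullet> s) * (a3 \<bullet> s) * (a4 \<bullet> s) * (a5 \<bullet> s) * (a6 \<bullet> s)) =
     RE (\<lambda>s. \<Sum>i1\<in>UNIV. \<Sum>i2\<in>UNIV. \<Sum>i3\<in>UNIV. \<Sum>i4\<in>UNIV. \<Sum>i5\<in>UNIV. \<Sum>i6\<in>UNIV. (a1$i1*a2$i2*a3$i3*a4$i4*a5$i5*a6$i6) * (s$i1 * s$i2 * s$i3 * s$i4 * s$i5 * s$i6))"
    by (rule arg_cong[where f=RE], rule ext, simp only: exp6, simp only: inner_sum sum_distrib_left[symmetric] sum_distrib_right[symmetric])
  also have "\<dots> = (\<Sum>i1\<in>UNIV. \<Sum>i2\<in>UNIV. \<Sum>i3\<in>UNIV. \<Sum>i4\<in>UNIV. \<Sum>i5\<in>UNIV. \<Sum>i6\<in>UNIV. (a1$i1*a2$i2*a3$i3*a4$i4*a5$i5*a6$i6) * F6 i1 i2 i3 i4 i5 i6)"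
    by (simp add: RE_sum RE_cmult m6)
  also have "\<dots> = ((\<Sum>j0\<in>UNIV. \<Sum>j1\<in>UNIV. \<Sum>j2\<in>UNIV. a1$j0*a2$j0 * a3$j1*a4$j1 * a5$j2*a6$j2) + (\<Sum>j0\<in>UNIV. \<Sum>j1\<in>UNIV. \<Sum>j2\<in>UNIV. a1$j0*a2$j0 * a3$j1*a5$j1 * a4$j2*a6$j2) + (\<Sum>j0\<in>UNIV. \<Sum>j1\<in>UNIV. \<Sum>j2\<in>UNIV. a1$j0*a2$j0 * a3$j1*a6$j1 * a4$j2*a5$j2) + (\<Sum>j0\<in>UNIV. \<Sum>j1\<in>UNIV. \<Sum>j2\<in>UNIV. a1$j0*a3$j0 * a2$j1*a4$j1 * a5$j2*a6$j2) + (\<Sum>j0\<in>UNIV. \<Sum>j1\<in>UNIV. \<Sum>j2\<in>UNIV. a1$j0*a3$j0 * a2$j1*a5$j1 * a4$j2*a6$j2) + (\<Sum>j0\<in>UNIV. \<Sum>j1\<in>UNIV. \<Sum>j2\<in>UNIV. a1$j0*a3$j0 * a2$j1*a6$j1 * a4$j2*a5$j2) + (\<Sum>j0\<in>UNIV. \<Sum>j1\<in>UNIV. \<Sum>j2\<in>UNIV. a1$j0*a4$j0 * a2$j1*a3$j1 * a5$j2*a6$j2) + (\<Sum>j0\<in>UNIV. \<Sum>j1\<in>UNIV. \<Sum>j2\<in>UNIV. a1$j0*a4$j0 * a2$j1*a5$j1 * a3$j2*a6$j2) + (\<Sum>j0\<in>UNIV. \<Sum>j1\<in>UNIV. \<Sum>j2\<in>UNIV.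 a1$j0*a4$j0 * a2$j1*a6$j1 * a3$j2*a5$j2) + (\<Sum>j0\<in>UNIV. \<Sum>j1\<in>UNIV. \<Sum>j2\<in>UNIV. a1$j0*a5$j0 * a2$j1*a3$j1 * a4$j2*a6$j2) + (\<Sum>j0\<in>UNIV. \<Sum>j1\<in>UNIV. \<Sum>j2\<in>UNIV. a1$j0*a5$j0 * a2$j1*a4$j1 * a3$j2*a6$j2) + (\<Sum>j0\<in>UNIV. \<Sum>j1\<in>UNIV. \<Sum>j2\<in>UNIV. a1$j0*a5$j0 * a2$j1*a6$j1 * a3$j2*a4$j2) + (\<Sum>j0\<in>UNIV. \<Sum>j1\<in>UNIV. \<Sum>j2\<in>UNIV. a1$j0*a6$j0 * a2$j1*a3$j1 * a4$j2*a5$j2) + (\<Sum>j0\<in>UNIV. \<Sum>j1\<in>UNIV. \<Sum>j2\<in>UNIV. a1$j0*a6$j0 * a2$j1*a4$j1 * a3$j2*a5$j2) + (\<Sum>j0\<in>UNIV. \<Sum>j1\<in>UNIV. \<Sum>j2\<in>UNIV. a1$j0*a6$j0 * a2$j1*a5$j1 * a3$j2*a4$j2)) - 2 * ((\<Sum>j0\<in>UNIV. \<Sum>j1\<in>UNIV. a1$j0*a2$j0 * a3$j1*a4$j1*a5$j1*a6$j1) + (\<Sum>j0\<in>UNIV. \<Sum>j1\<in>UNIV. a1$j0*a3$j0 * a2$j1*a4$j1*a5$j1*a6$j1) + (\<Sum>j0\<in>UNIV. \<Sum>j1\<in>UNIV. a1$j0*a4$j0 * a2$j1*a3$j1*a5$j1*a6$j1)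 + (\<Sum>j0\<in>UNIV. \<Sum>j1\<in>UNIV. a1$j0*a5$j0 * a2$j1*a3$j1*a4$j1*a6$j1) + (\<Sum>j0\<in>UNIV. \<Sum>j1\<in>UNIV. a1$j0*a6$j0 * a2$j1*a3$j1*a4$j1*a5$j1) + (\<Sum>j0\<in>UNIV. \<Sum>j1\<in>UNIV. a1$j0*a4$j0*a5$j0*a6$j0 * a2$j1*a3$j1) + (\<Sum>j0\<in>UNIV. \<Sum>j1\<in>UNIV. a1$j0*a3$j0*a5$j0*a6$j0 * a2$j1*a4$j1) + (\<Sum>j0\<in>UNIV. \<Sum>j1\<in>UNIV. a1$j0*a3$j0*a4$j0*a6$j0 * a2$j1*a5$j1) + (\<Sum>j0\<in>UNIV. \<Sum>j1\<in>UNIV. a1$j0*a3$j0*a4$j0*a5$j0 * a2$j1*a6$j1) + (\<Sum>j0\<in>UNIV. \<Sum>j1\<in>UNIV. a1$j0*a2$j0*a5$j0*a6$j0 * a3$j1*a4$j1) + (\<Sum>j0\<in>UNIV. \<Sum>j1\<in>UNIV. a1$j0*a2$j0*a4$j0*a6$j0 * a3$j1*a5$j1) + (\<Sum>j0\<in>UNIV. \<Sum>j1\<in>UNIV. a1$j0*a2$j0*a4$j0*a5$j0 * a3$j1*a6$j1) + (\<Sum>j0\<in>UNIV. \<Sum>j1\<in>UNIV. a1$j0*a2$j0*a3$j0*a6$j0 * a4$j1*a5$j1) + (\<Sum>j0\<in>UNIV. \<Sum>j1\<in>UNIV. a1$j0*a2$j0*a3$j0*a5$j0 * a4$j1*a6$j1)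 + (\<Sum>j0\<in>UNIV. \<Sum>j1\<in>UNIV. a1$j0*a2$j0*a3$j0*a4$j0 * a5$j1*a6$j1)) + 16 * (\<Sum>i\<in>UNIV. a1$i*a2$i*a3$i*a4$i*a5$i*a6$i)"
    unfolding F6_def dd_def
    by (simp add: mi1 mi2 si sum.distrib sum_subtractf sum_distrib_left algebra_simps)
  also have "\<dots> = ((a1 \<bullet> a2) * (a3 \<bullet> a4) * (a5 \<bullet> a6) + (a1 \<bullet> a2) * (a3 \<bullet> a5) * (a4 \<bullet> a6) + (a1 \<bullet> a2) * (a3 \<bullet> a6) * (a4 \<bullet> a5) + (a1 \<bullet> a3) * (a2 \<bullet> a4) * (a5 \<bullet> a6) + (a1 \<bullet> a3) * (a2 \<bullet> a5) * (a4 \<bullet> a6) + (a1 \<bullet> a3) * (a2 \<bullet> a6) * (a4 \<bullet> a5) + (a1 \<bullet> a4) * (a2 \<bullet> a3) * (a5 \<bullet> a6) + (a1 \<bullet> a4) * (a2 \<bullet> a5) * (a3 \<bullet> a6) + (a1 \<bullet> a4) * (a2 \<bullet> a6) * (a3 \<bullet> a5) + (a1 \<bullet> a5) * (a2 \<bullet> a3) * (a4 \<bullet> a6) + (a1 \<bullet> a5) * (a2 \<bullet> a4) * (a3 \<bullet> a6) + (a1 \<bullet> a5) * (a2 \<bullet> a6) * (a3 \<bullet> a4) + (a1 \<bullet> a6) * (a2 \<bullet> a3) * (a4 \<bullet> a5) + (a1 \<bullet> a6) * (a2 \<bullet> a4) * (a3 \<bullet> a5) + (a1 \<bullet> a6)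 * (a2 \<bullet> a5) * (a3 \<bullet> a4)) - 2 * ((a1 \<bullet> a2) * q4 a3 a4 a5 a6 + (a1 \<bullet> a3) * q4 a2 a4 a5 a6 + (a1 \<bullet> a4) * q4 a2 a3 a5 a6 + (a1 \<bullet> a5) * q4 a2 a3 a4 a6 + (a1 \<bullet> a6) * q4 a2 a3 a4 a5 + q4 a1 a4 a5 a6 * (a2 \<bullet> a3) + q4 a1 a3 a5 a6 * (a2 \<bullet> a4) + q4 a1 a3 a4 a6 * (a2 \<bullet> a5) + q4 a1 a3 a4 a5 * (a2 \<bullet> a6) + q4 a1 a2 a5 a6 * (a3 \<bullet> a4) + q4 a1 a2 a4 a6 * (a3 \<bullet> a5) + q4 a1 a2 a4 a5 * (a3 \<bullet> a6) + q4 a1 a2 a3 a6 * (a4 \<bullet> a5) + q4 a1 a2 a3 a5 * (a4 \<bullet> a6) + q4 a1 a2 a3 a4 * (a5 \<bullet> a6)) + 16 * q6 a1 a2 a3 a4 a5 a6"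
    by (simp only: inner_sum q4_def q6_def, simp only: prod3, simp only: sum_product mult.assoc)
  finally show ?thesis .
qed




lemma minv: assumes "invertible (A::real^'n^'n)" shows "A ** matrix_inv A = mat 1" "matrix_inv A ** A = mat 1"
proof -
  obtain B where "A ** B = mat 1 \<and> B ** A = mat 1" using assms unfolding invertible_def by blast
  hence "A ** matrix_inv A = mat 1 \<and> matrix_inv A ** A = mat 1"
    unfolding matrix_inv_def by (rule someI)
  thus "A ** matrix_inv A = mat 1" "matrix_inv A ** A = mat 1" by auto
qed

lemma minv_sym: assumes "invertible (A::real^'n^'n)" "transpose A = A"
  shows "transpose (matrix_inv A) = matrix_inv A"
proof -
  have "transpose (matrix_inv A) ** A = mat 1"
  proof -
    have "transpose (matrix_inv A) ** A = transpose (matrix_inv A) ** transpose A" using assms(2) by simp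
    also have "\<dots> = transpose (A ** matrix_inv A)" by (simp only: matrix_transpose_mul)
    also have "\<dots> = mat 1" using minv(1)[OF assms(1)] by (simp add: transpose_mat)
    finally show ?thesis .
  qed
  hence "transpose (matrix_inv A) = transpose (matrix_inv A) ** (A ** matrix_inv A)"
    using minv(1)[OF assms(1)] by simp
  also have "\<dots> = matrix_inv A" using \<open>transpose (matrix_inv A) ** A = mat 1\<close>
    by (simp add: matrix_mul_assoc)
  finally show ?thesis .
qed

lemma transpose_diagm[simp]: "transpose (diagm v) = diagm v"
  by (simp add: transpose_def diagm_def vec_eq_iff)

lemma diagm_right[simp]: "(A ** diagm v) $ i $ j = A$i$j * v$j"
  by (simp add: matrix_matrix_mult_def diagm_def mi1 mi2)
lemma diagm_left[simp]: "(diagm v ** A) $ i $ j = v$i * A$i$j"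
  by (simp add: matrix_matrix_mult_def diagm_def mi1 mi2)
lemma diagm_vec[simp]: "(diagm v *v x) $ i = v$i * x$i"
  by (simp add: matrix_vector_mult_def diagm_def mi1 mi2)
lemma mm_ent: "(A ** B) $ i $ j = (\<Sum>k\<in>UNIV. A$i$k * B$k$j)"
  by (simp add: matrix_matrix_mult_def)
lemma mv_ent: "(A *v x) $ i = (\<Sum>k\<in>UNIV. A$i$k * x$k)"
  by (simp add: matrix_vector_mult_def)

locale ivctx =
  fixes e :: "real^'n" and Z :: "real^'k^'n"
  assumes inv: "invertible (transpose Z ** diagm e ** diagm e ** Z)"
begin

abbreviation "V \<equiv> Vmat e Z"
abbreviation "P \<equiv> Pmat e Z"
abbreviation "M0 \<equiv> transpose Z ** diagm e ** diagm e ** Z"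

lemma M0_sym: "transpose M0 = M0"
  by (simp add: matrix_transpose_mul matrix_mul_assoc)

lemma Mi_sym: "transpose (matrix_inv M0) = matrix_inv M0"
  by (rule minv_sym[OF inv M0_sym])

lemma V_sym: "transpose V = V"
  unfolding Vmat_def by (simp add: matrix_transpose_mul matrix_mul_assoc Mi_sym)

lemma V_sym': "V$i$j = V$j$i"
  using V_sym by (metis transpose_def vec_lambda_beta)

lemma VDDV: "V ** diagm e ** diagm e ** V = V"
proof -
  have "V ** diagm e ** diagm e ** V = Z ** (matrix_inv M0 ** M0) ** matrix_inv M0 ** transpose Z"
    unfolding Vmat_def by (simp add: matrix_mul_assoc)
  also have "\<dots> = V" unfolding Vmat_def minv(2)[OF inv] by simp
  finally show ?thesis .
qed

lemma VV: "(\<Sum>k\<in>UNIV. V$i$k * (e$k * e$k) * V$j$k) = V$i$j"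
proof -
  have "(V ** diagm e ** diagm e ** V)$i$j = V$i$j" using VDDV by simp
  thus ?thesis by (simp only: mm_ent[of "V ** diagm e ** diagm e" V]) (simp add: V_sym'[of _ j] mult.assoc)
qed

lemma P_ent: "P$i$j = e$i * V$i$j * e$j"
  unfolding Pmat_def by simp

lemma P_sym': "P$i$j = P$j$i"
  by (simp add: P_ent V_sym'[of i j])

end



lemma M2: "RE (\<lambda>s. (a \<bullet> s) * (b \<bullet> s)) = a \<bullet> b"
proof -
  have "RE (\<lambda>s. (a \<bullet> s) * (b \<bullet> s)) = RE (\<lambda>s. \<Sum>i1\<in>UNIV. \<Sum>i2\<in>UNIV. (a$i1*b$i2) * (s$i1 * s$i2))"
    by (rule arg_cong[where f=RE], rule ext) (simp add: inner_sum sum_product ac_simps)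
  also have "\<dots> = (\<Sum>i1\<in>UNIV. \<Sum>i2\<in>UNIV. (a$i1*b$i2) * dd i1 i2)"
    by (simp add: RE_sum RE_cmult m2')
  also have "\<dots> = a \<bullet> b" unfolding dd_def inner_sum by (simp add: mi1 mi2)
  finally show ?thesis .
qed

lemma neg_SV: "s \<in> SV \<Longrightarrow> - s \<in> SV" by (auto simp: SV_def)

lemma RE_neg: "RE (\<lambda>s. f (- s)) = RE f"
  unfolding RE_def
  by (rule arg_cong[where f="\<lambda>x. x / _"], rule sum.reindex_bij_witness[of _ uminus uminus])
     (auto simp: neg_SV)

lemma RE_oddg: assumes "\<And>s. f (- s) = - f s" shows "RE f = 0"
proof -
  have "RE f = RE (\<lambda>s. f (- s))" by (rule RE_neg[symmetric])
  also have "\<dots> = RE (\<lambda>s. - f s)" by (simp add: assms)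
  also have "\<dots> = - RE f" using RE_cmult[of "-1" f] by simp
  finally show ?thesis by simp
qed

definition Dv :: "'n \<Rightarrow> real^'n" where "Dv i = (\<chi> k. dd i k)"

lemma Dv_inner[simp]: "Dv i \<bullet> x = x$i" "x \<bullet> Dv i = x$i"
  unfolding Dv_def inner_sum dd_def by (simp_all add: mi1 mi2)

lemma q4_D[simp]: "q4 (Dv i) b c d = b$i * c$i * d$i" "q4 a (Dv i) c d = a$i * c$i * d$i"
   "q4 a b (Dv i) d = a$i * b$i * d$i" "q4 a b c (Dv i) = a$i * b$i * c$i"
  unfolding Dv_def q4_def dd_def by (simp_all add: mi1 mi2)

lemma q6_D[simp]: "q6 (Dv i) b c d e f = b$i * c$i * d$i * e$i * f$i"
  "q6 a (Dv i) c d e f = a$i * c$i * d$i * e$i * f$i"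
  unfolding Dv_def q6_def dd_def by (simp_all add: mi1 mi2)

lemma Dv_nth[simp]: "Dv i $ k = dd i k" by (simp add: Dv_def)

lemma dd_sum1: fixes f :: "'n::finite \<Rightarrow> real" shows "(\<Sum>k\<in>UNIV. dd i k * f k) = (f i :: real)"
  unfolding dd_def by (simp add: mi2)
lemma dd_sum2: fixes f :: "'n::finite \<Rightarrow> real" shows "(\<Sum>k\<in>UNIV. dd k j * f k) = (f j :: real)"
  unfolding dd_def by (simp add: mi2)

lemma diagpart_eq: "diagpart A = diagm (\<chi> i. A$i$i)"
  by (simp add: diagpart_def hadamard_def mat_def diagm_def vec_eq_iff)
lemma I_minus_diagm: "mat 1 - diagm v = diagm (\<chi> i. 1 - v$i)"
  by (simp add: mat_def diagm_def vec_eq_iff)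
lemma I_minus_2diagm: "mat 1 - 2 *\<^sub>R diagm v = diagm (\<chi> i. 1 - 2 * v$i)"
  by (simp add: mat_def diagm_def vec_eq_iff)
lemma diagm_ent: "diagm v $ i $ j = dd i j * v$i"
  by (simp add: diagm_def dd_def)
lemma hadamard_ent: "(A \<odot> B) $ i $ j = A$i$j * B$i$j"
  by (simp add: hadamard_def)

context ivctx begin

definition Uv :: "'n \<Rightarrow> real^'n" where "Uv i = (\<chi> k. V$i$k * e$k)"
definition Pv :: "'n \<Rightarrow> real^'n" where "Pv i = (\<chi> k. P$i$k)"

lemma Uv_nth[simp]: "Uv i $ k = V$i$k * e$k" by (simp add: Uv_def)
lemma Pv_nth[simp]: "Pv i $ k = e$i * V$i$k * e$k" by (simp add: Pv_def P_ent)

lemma UU[simp]: "Uv i \<bullet> Uv j = V$i$j"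
  unfolding inner_sum using VV[of i j] by (simp add: ac_simps)
lemma UP[simp]: "Uv i \<bullet> Pv j = e$j * V$i$j"
proof -
  have "Uv i \<bullet> Pv j = e$j * (\<Sum>k\<in>UNIV. V$i$k * (e$k * e$k) * V$j$k)"
    unfolding inner_sum by (simp add: sum_distrib_left ac_simps)
  thus ?thesis using VV by simp
qed
lemma PU[simp]: "Pv j \<bullet> Uv i = e$j * V$i$j" using UP by (simp add: inner_commute)
lemma PP[simp]: "Pv i \<bullet> Pv j = e$i * V$i$j * e$j"
proof -
  have "Pv i \<bullet> Pv j = e$i * e$j * (\<Sum>k\<in>UNIV. V$i$k * (e$k * e$k) * V$j$k)"
    unfolding inner_sum by (simp add: sum_distrib_left ac_simps)
  thus ?thesis using VV by simp
qed

definition cc :: "'n \<Rightarrow> real^'n \<Rightarrow> real" where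
  "cc j r = (Uv j \<bullet> r) * ((Dv j \<bullet> r) * (Pv j \<bullet> r) - 1)"
definition dq :: "'n \<Rightarrow> real^'n \<Rightarrow> real" where
  "dq j r = (Pv j \<bullet> r) * ((Pv j \<bullet> r) - (Dv j \<bullet> r))"

lemma Uv_r: "((V ** diagm e) *v r) $ j = Uv j \<bullet> r"
  by (simp add: mv_ent inner_sum)
lemma Pv_r: "(P *v r) $ j = Pv j \<bullet> r"
  by (simp add: mv_ent inner_sum P_ent)

lemma Uv_r': "(V *v (diagm e *v r)) $ j = Uv j \<bullet> r"
  by (simp only: mv_ent[of V] diagm_vec inner_sum Uv_nth) (simp add: ac_simps)

lemma rP: "r \<bullet> (P *v y) = (\<Sum>k\<in>UNIV. (Pv k \<bullet> r) * y$k)"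
proof -
  have "r \<bullet> (P *v y) = (\<Sum>i\<in>UNIV. \<Sum>k\<in>UNIV. r$i * P$i$k * y$k)"
    by (simp add: inner_sum mv_ent sum_distrib_left mult.assoc)
  also have "\<dots> = (\<Sum>k\<in>UNIV. \<Sum>i\<in>UNIV. r$i * P$k$i * y$k)"
    by (subst sum.swap, rule sum.cong[OF refl], rule sum.cong[OF refl]) (metis P_sym')
  also have "\<dots> = (\<Sum>k\<in>UNIV. (Pv k \<bullet> r) * y$k)"
    by (simp add: inner_sum sum_distrib_right sum_distrib_left P_ent ac_simps)
  finally show ?thesis .
qed

lemma S_rad_eq: "S_rad e Z xb al r = (1 / real CARD('n)) *
   ((\<Sum>j\<in>UNIV. xb$j * cc j r) + (\<Sum>j\<in>UNIV. al$j * dq j r))"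
proof -
  have A: "P ** diagm r ** diagm xb ** V ** diagm e = P ** (diagm r ** (diagm xb ** (V ** diagm e)))"
    by (simp only: matrix_mul_assoc)
  have B: "P ** diagm al ** P = P ** (diagm al ** P)" by (simp only: matrix_mul_assoc)
  have t1: "xb \<bullet> (V *v (diagm e *v r)) = (\<Sum>j\<in>UNIV. xb$j * (Uv j \<bullet> r))"
    by (simp only: inner_sum Uv_r')
  have t2: "r \<bullet> ((diagm al ** P) *v r) = (\<Sum>j\<in>UNIV. al$j * (r$j * (Pv j \<bullet> r)))"
    by (simp add: matrix_vector_mul_assoc[symmetric] inner_sum Pv_r ac_simps)
  have t3: "r \<bullet> ((P ** diagm al ** P) *v r) = (\<Sum>j\<in>UNIV. al$j * ((Pv j \<bullet> r) * (Pv j \<bullet> r)))"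
    unfolding B by (simp add: matrix_vector_mul_assoc[symmetric] rP Pv_r ac_simps)
  have t4: "r \<bullet> ((P ** diagm r ** diagm xb ** V ** diagm e) *v r) =
     (\<Sum>j\<in>UNIV. xb$j * ((Uv j \<bullet> r) * (Dv j \<bullet> r) * (Pv j \<bullet> r)))"
    unfolding A by (simp add: matrix_vector_mul_assoc[symmetric] rP Uv_r' ac_simps)
  show ?thesis
    unfolding S_rad_def Let_def Pmat_def[symmetric] t1 t2 t3 t4 cc_def dq_def
    by (simp add: algebra_simps sum.distrib sum_subtractf sum_distrib_left sum_negf)
qed

lemma EC_expand: "RE (\<lambda>r. cc i r * cc j r) =
   RE (\<lambda>r. (Uv i \<bullet> r) * (Dv i \<bullet> r) * (Pv i \<bullet> r) * (Uv j \<bullet> r) * (Dv j \<bullet> r) * (Pv j \<bullet> r))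
 - RE (\<lambda>r. (Uv i \<bullet> r) * (Dv i \<bullet> r) * (Pv i \<bullet> r) * (Uv j \<bullet> r))
 - RE (\<lambda>r. (Uv i \<bullet> r) * (Uv j \<bullet> r) * (Dv j \<bullet> r) * (Pv j \<bullet> r))
 + RE (\<lambda>r. (Uv i \<bullet> r) * (Uv j \<bullet> r))"
proof -
  have "RE (\<lambda>r. cc i r * cc j r) = RE (\<lambda>r.
     (Uv i \<bullet> r) * (Dv i \<bullet> r) * (Pv i \<bullet> r) * (Uv j \<bullet> r) * (Dv j \<bullet> r) * (Pv j \<bullet> r)
   - (Uv i \<bullet> r) * (Dv i \<bullet> r) * (Pv i \<bullet> r) * (Uv j \<bullet> r)
   - (Uv i \<bullet> r) * (Uv j \<bullet> r) * (Dv j \<bullet> r) * (Pv j \<bullet> r)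
   + (Uv i \<bullet> r) * (Uv j \<bullet> r))"
    by (rule arg_cong[where f=RE], rule ext) (simp only: cc_def Dv_inner, algebra)
  thus ?thesis by (simp only: RE_add RE_diff)
qed

lemma q4UP: "q4 (Uv i) (Pv i) (Uv i) (Pv i) = (\<Sum>j\<in>UNIV. (V$i$j)^2 * (e$j)^2 * (P$i$j)^2)"
  unfolding q4_def by (rule sum.cong[OF refl]) (simp add: P_ent power2_eq_square)

lemma EC: "RE (\<lambda>r. cc i r * cc j r) = ((mat 1 - diagpart P) ** V ** (mat 1 - diagpart P)
   + diagpart P ** diagpart V ** (mat 1 - 2 *\<^sub>R diagpart P) + V \<odot> P \<odot> P + VW e Z) $ i $ j"
proof (cases "i = j")
  case True
  show ?thesis unfolding EC_expand M6 M4 M2 True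
    by (simp add: diagpart_eq I_minus_diagm I_minus_2diagm diagm_ent hadamard_ent VW_def Let_def q4UP P_ent dd_def)
       (simp add: algebra_simps power2_eq_square)
next
  case False
  have s: "V$j$i = V$i$j" by (rule V_sym')
  have d: "dd i j = 0" "dd j i = 0" using False by (auto simp: dd_def)
  show ?thesis unfolding EC_expand M6 M4 M2
    by (simp add: diagpart_eq I_minus_diagm I_minus_2diagm diagm_ent hadamard_ent VW_def Let_def P_ent d s False)
       (simp add: algebra_simps power2_eq_square)
qed

lemma ED_expand: "RE (\<lambda>r. dq i r * dq j r) =
   RE (\<lambda>r. (Pv i \<bullet> r) * (Pv i \<bullet> r) * (Pv j \<bullet> r) * (Pv j \<bullet> r))
 - RE (\<lambda>r. (Pv i \<bullet> r) * (Pv i \<bullet> r) * (Pv j \<bullet> r) * (Dv j \<bullet> r))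
 - RE (\<lambda>r. (Pv i \<bullet> r) * (Dv i \<bullet> r) * (Pv j \<bullet> r) * (Pv j \<bullet> r))
 + RE (\<lambda>r. (Pv i \<bullet> r) * (Dv i \<bullet> r) * (Pv j \<bullet> r) * (Dv j \<bullet> r))"
proof -
  have "RE (\<lambda>r. dq i r * dq j r) = RE (\<lambda>r.
     (Pv i \<bullet> r) * (Pv i \<bullet> r) * (Pv j \<bullet> r) * (Pv j \<bullet> r)
   - (Pv i \<bullet> r) * (Pv i \<bullet> r) * (Pv j \<bullet> r) * (Dv j \<bullet> r)
   - (Pv i \<bullet> r) * (Dv i \<bullet> r) * (Pv j \<bullet> r) * (Pv j \<bullet> r)
   + (Pv i \<bullet> r) * (Dv i \<bullet> r) * (Pv j \<bullet> r) * (Dv j \<bullet> r))"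
    by (rule arg_cong[where f=RE], rule ext) (simp only: dq_def Dv_inner, algebra)
  thus ?thesis by (simp only: RE_add RE_diff)
qed

abbreviation "AP \<equiv> diagpart P - P \<odot> P"

lemma AP_ent: "AP $ i $ j = dd i j * P$i$i - P$i$j * P$i$j"
  by (simp add: diagpart_eq diagm_ent hadamard_ent)

lemma AA_ent: "(AP ** AP) $ i $ j = dd i j * P$i$i * P$i$i - P$i$i * P$i$j * P$i$j - P$i$j * P$i$j * P$j$j
   + q4 (Pv i) (Pv i) (Pv j) (Pv j)"
proof -
  have "(AP ** AP) $ i $ j = (\<Sum>k\<in>UNIV. (dd i k * P$i$i - P$i$k * P$i$k) * (dd k j * P$k$k - P$k$j * P$k$j))"
    by (simp only: mm_ent AP_ent)
  also have "\<dots> = (\<Sum>k\<in>UNIV. dd i k * (P$i$i * (dd k j * P$k$k - P$k$j * P$k$j)))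
      - (\<Sum>k\<in>UNIV. dd k j * (P$i$k * P$i$k * P$k$k)) + (\<Sum>k\<in>UNIV. P$i$k * P$i$k * P$k$j * P$k$j)"
    by (simp add: algebra_simps sum_subtractf sum.distrib)
  also have "\<dots> = dd i j * P$i$i * P$i$i - P$i$i * P$i$j * P$i$j - P$i$j * P$i$j * P$j$j
   + q4 (Pv i) (Pv i) (Pv j) (Pv j)"
  proof -
    have s3: "(\<Sum>k\<in>UNIV. P$i$k * P$i$k * P$k$j * P$k$j) = q4 (Pv i) (Pv i) (Pv j) (Pv j)"
      unfolding q4_def
    proof (rule sum.cong[OF refl])
      fix k
      have "P$k$j = P$j$k" by (rule P_sym')
      thus "P$i$k * P$i$k * P$k$j * P$k$j = Pv i $ k * Pv i $ k * Pv j $ k * Pv j $ k"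
        by (simp add: Pv_def)
    qed
    show ?thesis unfolding s3 dd_sum1 dd_sum2 by (simp add: algebra_simps)
  qed
  finally show ?thesis .
qed

lemma ED: "RE (\<lambda>r. dq i r * dq j r) = AP $ i $ j - 2 * (AP ** AP) $ i $ j"
proof (cases "i = j")
  case True
  show ?thesis unfolding ED_expand M4 AA_ent AP_ent True
    by (simp add: P_ent dd_def; simp add: algebra_simps)
next
  case False
  have s: "V$j$i = V$i$j" by (rule V_sym')
  have d: "dd i j = 0" "dd j i = 0" using False by (auto simp: dd_def)
  show ?thesis unfolding ED_expand M4 AA_ent AP_ent
    by (simp add: P_ent d s; simp add: algebra_simps)
qed

lemma cc_odd: "cc i (- r) = - cc i r" by (simp add: cc_def inner_minus_right algebra_simps)
lemma dq_even: "dq i (- r) = dq i r" by (simp add: dq_def inner_minus_right algebra_simps)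

lemma ECD: "RE (\<lambda>r. cc i r * dq j r) = 0" by (rule RE_oddg) (simp add: cc_odd dq_even)
lemma EDC: "RE (\<lambda>r. dq i r * cc j r) = 0" by (rule RE_oddg) (simp add: cc_odd dq_even)
lemma EC1: "RE (cc i) = 0" by (rule RE_oddg) (simp add: cc_odd)
lemma ED1: "RE (dq i) = 0"
proof -
  have "RE (dq i) = RE (\<lambda>r. (Pv i \<bullet> r) * (Pv i \<bullet> r)) - RE (\<lambda>r. (Pv i \<bullet> r) * (Dv i \<bullet> r))"
    unfolding dq_def by (simp add: RE_diff[symmetric] algebra_simps)
  thus ?thesis unfolding M2 by (simp add: P_ent)
qed

end



lemma sqbound: "\<bar>a * b\<bar> \<le> a^2 + (b::real)^2"
proof -
  have "0 \<le> (\<bar>a\<bar> - \<bar>b\<bar>)^2" by simp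
  hence "2 * (\<bar>a\<bar> * \<bar>b\<bar>) \<le> a^2 + b^2" by (simp add: power2_eq_square algebra_simps)
  moreover have "0 \<le> \<bar>a\<bar> * \<bar>b\<bar>" by simp
  moreover have "\<bar>a * b\<bar> = \<bar>a\<bar> * \<bar>b\<bar>" by (rule abs_mult)
  ultimately show ?thesis by linarith
qed

locale urv =
  fixes M :: "'w measure" and u :: "'w \<Rightarrow> real^'p^'n"
  assumes M: "prob_space M"
    and u_meas: "\<And>i l. (\<lambda>w. u w $ i $ l) \<in> borel_measurable M"
    and u_indep: "prob_space.indep_vars M (\<lambda>_. borel) (\<lambda>i w. u w $ i) UNIV"
    and u_sq: "\<And>i l. integrable M (\<lambda>w. (u w $ i $ l)^2)"
    and u_mean: "\<And>i l. prob_space.expectation M (\<lambda>w. u w $ i $ l) = 0"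
begin

interpretation prob_space M by (rule M)

lemma u_int: "integrable M (\<lambda>w. u w $ i $ l)"
  by (rule square_integrable_imp_integrable[OF u_meas u_sq])

lemma uu_int: "integrable M (\<lambda>w. u w $ i $ l1 * u w $ j $ l2)"
proof (rule Bochner_Integration.integrable_bound)
  show "integrable M (\<lambda>w. (u w $ i $ l1)^2 + (u w $ j $ l2)^2)" using u_sq by simp
  show "(\<lambda>w. u w $ i $ l1 * u w $ j $ l2) \<in> borel_measurable M" using u_meas by measurable
  show "AE w in M. norm (u w $ i $ l1 * u w $ j $ l2) \<le> norm ((u w $ i $ l1)^2 + (u w $ j $ l2)^2)"
    using sqbound by (simp add: add_nonneg_nonneg)
qed

lemma uu_indep: assumes "i \<noteq> j" shows "expectation (\<lambda>w. u w $ i $ l1 * u w $ j $ l2) = 0"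
proof -
  define Y where "Y k v = (v::real^'p) $ (if k = i then l1 else l2)" for k v
  have "indep_vars (\<lambda>_. borel) (\<lambda>k w. Y k (u w $ k)) UNIV"
    by (rule indep_vars_compose2[OF u_indep])
       (auto simp: Y_def intro!: borel_measurable_continuous_onI continuous_on_component continuous_on_id)
  hence ind: "indep_vars (\<lambda>_. borel) (\<lambda>k w. Y k (u w $ k)) {i, j}"
    by (rule indep_vars_subset) auto
  have "expectation (\<lambda>w. \<Prod>k\<in>{i,j}. Y k (u w $ k)) = (\<Prod>k\<in>{i,j}. expectation (\<lambda>w. Y k (u w $ k)))"
    by (rule indep_vars_lebesgue_integral[OF _ ind]) (auto simp: Y_def u_int)
  thus ?thesis using assms by (simp add: Y_def u_mean)
qed

lemma uu_E: "expectation (\<lambda>w. u w $ i $ l1 * u w $ j $ l2) =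
   (if i = j then expectation (\<lambda>w. u w $ i $ l1 * u w $ i $ l2) else 0)"
  using uu_indep by auto

lemma I1: "integrable M (\<lambda>w. \<Sum>j\<in>UNIV. c j * u w $ j $ l)"
  by (intro Bochner_Integration.integrable_sum Bochner_Integration.integrable_mult_right u_int)
lemma I2: "integrable M (\<lambda>w. \<Sum>i\<in>UNIV. \<Sum>j\<in>UNIV. d i j * (u w $ i $ l1 * u w $ j $ l2))"
  by (intro Bochner_Integration.integrable_sum Bochner_Integration.integrable_mult_right uu_int)
lemma E_lin0: "expectation (\<lambda>w. \<Sum>j\<in>UNIV. c j * u w $ j $ l) = 0"
  by (subst Bochner_Integration.integral_sum) (auto intro!: Bochner_Integration.integrable_mult_right u_int simp: u_mean)
lemma E_quad: "expectation (\<lambda>w. \<Sum>i\<in>UNIV. \<Sum>j\<in>UNIV. d i j * (u w $ i $ l1 * u w $ j $ l2))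
   = (\<Sum>i\<in>UNIV. \<Sum>j\<in>UNIV. d i j * expectation (\<lambda>w. u w $ i $ l1 * u w $ j $ l2))"
proof -
  have "expectation (\<lambda>w. \<Sum>i\<in>UNIV. \<Sum>j\<in>UNIV. d i j * (u w $ i $ l1 * u w $ j $ l2))
    = (\<Sum>i\<in>UNIV. expectation (\<lambda>w. \<Sum>j\<in>UNIV. d i j * (u w $ i $ l1 * u w $ j $ l2)))"
    by (rule Bochner_Integration.integral_sum) (intro Bochner_Integration.integrable_sum Bochner_Integration.integrable_mult_right uu_int)
  also have "\<dots> = (\<Sum>i\<in>UNIV. \<Sum>j\<in>UNIV. d i j * expectation (\<lambda>w. u w $ i $ l1 * u w $ j $ l2))"
    by (rule sum.cong[OF refl], subst Bochner_Integration.integral_sum) (auto intro!: Bochner_Integration.integrable_mult_right uu_int)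
  finally show ?thesis .
qed

lemma lin_E: "expectation (\<lambda>w. a + (1/N) * (\<Sum>j\<in>UNIV. c j * u w $ j $ l)) = a"
proof -
  have "expectation (\<lambda>w. a + (1/N) * (\<Sum>j\<in>UNIV. c j * u w $ j $ l)) =
     expectation (\<lambda>w. a) + expectation (\<lambda>w. (1/N) * (\<Sum>j\<in>UNIV. c j * u w $ j $ l))"
    by (rule Bochner_Integration.integral_add) (rule integrable_const, rule Bochner_Integration.integrable_mult_right, rule I1)
  also have "\<dots> = a" by (simp only: integral_mult_right_zero E_lin0) (simp add: prob_space)
  finally show ?thesis .
qed

lemma quad_E: assumes "N \<noteq> 0"
  shows "expectation (\<lambda>w. N * (a1 + (1/N) * (\<Sum>j\<in>UNIV. c j * u w $ j $ l1))
                            * (a2 + (1/N) * (\<Sum>j\<in>UNIV. c j * u w $ j $ l2)))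
    = N * a1 * a2 + (1/N) * (\<Sum>j\<in>UNIV. c j * c j * expectation (\<lambda>w. u w $ j $ l1 * u w $ j $ l2))"
proof -
  have pt: "\<And>w. N * (a1 + (1/N) * (\<Sum>j\<in>UNIV. c j * u w $ j $ l1)) * (a2 + (1/N) * (\<Sum>j\<in>UNIV. c j * u w $ j $ l2))
     = N * a1 * a2 + ((a1 * (\<Sum>j\<in>UNIV. c j * u w $ j $ l2) + a2 * (\<Sum>j\<in>UNIV. c j * u w $ j $ l1))
       + (1/N) * (\<Sum>i\<in>UNIV. \<Sum>j\<in>UNIV. (c i * c j) * (u w $ i $ l1 * u w $ j $ l2)))"
    using assms by (simp add: field_simps sum_product sum_distrib_left sum_distrib_right sum.distrib)
  have iY: "integrable M (\<lambda>w. a1 * (\<Sum>j\<in>UNIV. c j * u w $ j $ l2) + a2 * (\<Sum>j\<in>UNIV. c j * u w $ j $ l1))"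
    by (intro Bochner_Integration.integrable_add Bochner_Integration.integrable_mult_right I1)
  have iZ: "integrable M (\<lambda>w. (1/N) * (\<Sum>i\<in>UNIV. \<Sum>j\<in>UNIV. (c i * c j) * (u w $ i $ l1 * u w $ j $ l2)))"
    by (intro Bochner_Integration.integrable_mult_right I2)
  have eY: "expectation (\<lambda>w. a1 * (\<Sum>j\<in>UNIV. c j * u w $ j $ l2) + a2 * (\<Sum>j\<in>UNIV. c j * u w $ j $ l1)) = 0"
    by (subst Bochner_Integration.integral_add) (auto intro!: Bochner_Integration.integrable_mult_right I1 simp only: integral_mult_right_zero E_lin0)
  have "expectation (\<lambda>w. N * (a1 + (1/N) * (\<Sum>j\<in>UNIV. c j * u w $ j $ l1))
                            * (a2 + (1/N) * (\<Sum>j\<in>UNIV. c j * u w $ j $ l2)))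
     = expectation (\<lambda>w. N * a1 * a2) + (expectation (\<lambda>w. a1 * (\<Sum>j\<in>UNIV. c j * u w $ j $ l2) + a2 * (\<Sum>j\<in>UNIV. c j * u w $ j $ l1))
       + expectation (\<lambda>w. (1/N) * (\<Sum>i\<in>UNIV. \<Sum>j\<in>UNIV. (c i * c j) * (u w $ i $ l1 * u w $ j $ l2))))"
    unfolding pt
    by (subst Bochner_Integration.integral_add, rule integrable_const, rule Bochner_Integration.integrable_add[OF iY iZ],
        subst Bochner_Integration.integral_add[OF iY iZ], rule refl)
  also have "\<dots> = N * a1 * a2 + (1/N) * (\<Sum>i\<in>UNIV. \<Sum>j\<in>UNIV. (c i * c j) * expectation (\<lambda>w. u w $ i $ l1 * u w $ j $ l2))"
    by (simp only: eY integral_mult_right_zero E_quad) (simp add: prob_space)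
  also have "\<dots> = N * a1 * a2 + (1/N) * (\<Sum>j\<in>UNIV. c j * c j * expectation (\<lambda>w. u w $ j $ l1 * u w $ j $ l2))"
    by (subst uu_E) (simp add: mi1 if_distrib cong: if_cong)
  finally show ?thesis .
qed

end



lemma bil: "(x::real^'n) \<bullet> (A *v y) = (\<Sum>i\<in>UNIV. \<Sum>j\<in>UNIV. x$i * y$j * A$i$j)"
  by (simp add: inner_sum mv_ent sum_distrib_left ac_simps)

lemma mat1_ii: "(mat 1 :: real^'n^'n) $ i $ i = 1" by (simp add: mat_def)

lemma comb_u: "(1 / N) * (\<Sum>i\<in>UNIV. SU$i * A i) + - (2 / N) * (\<Sum>i\<in>UNIV. SU$i * (B i + C i))
   = (1 / N) * (\<Sum>i\<in>UNIV. (SU::real^'n)$i * (A i - 2 * B i - 2 * C i))"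
  by (simp add: algebra_simps sum_subtractf sum.distrib sum_distrib_left sum_negf)

lemma bil2: "(1 / N) * ((x::real^'n) \<bullet> (A *v y)) + - (2 / N) * (x \<bullet> (B *v y))
   = (1 / N) * (\<Sum>i\<in>UNIV. \<Sum>j\<in>UNIV. x$i * y$j * (A$i$j - 2 * B$i$j))"
  unfolding bil by (simp add: algebra_simps sum_subtractf sum_distrib_left sum_negf)

context ivctx begin

abbreviation "Lm \<equiv> (mat 1 - diagpart P) ** V ** (mat 1 - diagpart P)
   + diagpart P ** diagpart V ** (mat 1 - 2 *\<^sub>R diagpart P) + V \<odot> P \<odot> P + VW e Z"

lemma n_ne: "real CARD('n) \<noteq> 0" by simp

lemma S_shift: "S_rad e Z (zb + column l U) al r
   = S_rad e Z zb al r + (1 / real CARD('n)) * (\<Sum>j\<in>UNIV. cc j r * U $ j $ l)"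
  unfolding S_rad_eq by (simp add: column_def algebra_simps sum.distrib)

lemma RE_S: "RE (S_rad e Z x b) = 0"
  unfolding S_rad_eq
  by (simp only: RE_cmult RE_add RE_sum[OF finite_class.finite_UNIV] EC1 ED1) simp

lemma RE_SS: "RE (\<lambda>r. real CARD('n) * S_rad e Z x1 b1 r * S_rad e Z x2 b2 r)
  = (1 / real CARD('n)) * (\<Sum>i\<in>UNIV. \<Sum>j\<in>UNIV. x1$i * x2$j * Lm$i$j + b1$i * b2$j * (AP$i$j - 2 * (AP ** AP)$i$j))"
proof -
  have pt: "\<And>r. real CARD('n) * S_rad e Z x1 b1 r * S_rad e Z x2 b2 r =
     (1 / real CARD('n)) * (\<Sum>i\<in>UNIV. \<Sum>j\<in>UNIV.
        (x1$i * x2$j) * (cc i r * cc j r) + ((x1$i * b2$j) * (cc i r * dq j r)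
        + ((b1$i * x2$j) * (dq i r * cc j r) + (b1$i * b2$j) * (dq i r * dq j r))))"
  proof -
    fix r
    have "real CARD('n) * S_rad e Z x1 b1 r * S_rad e Z x2 b2 r =
       (1 / real CARD('n)) * ((\<Sum>i\<in>UNIV. x1$i * cc i r + b1$i * dq i r) * (\<Sum>j\<in>UNIV. x2$j * cc j r + b2$j * dq j r))"
      unfolding S_rad_eq sum.distrib using n_ne by (simp add: field_simps)
    also have "\<dots> = (1 / real CARD('n)) * (\<Sum>i\<in>UNIV. \<Sum>j\<in>UNIV.
        (x1$i * x2$j) * (cc i r * cc j r) + ((x1$i * b2$j) * (cc i r * dq j r)
        + ((b1$i * x2$j) * (dq i r * cc j r) + (b1$i * b2$j) * (dq i r * dq j r))))"
      unfolding sum_product by (simp add: algebra_simps)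
    finally show "?thesis r" .
  qed
  show ?thesis
    unfolding pt
    by (simp only: RE_cmult RE_sum[OF finite_class.finite_UNIV] RE_add EC ECD EDC ED) (simp add: algebra_simps)
qed

lemma Lm_diag: "Lm $ i $ i = V$i$i * (1 - P$i$i) - 2 * (V$i$i * P$i$i * (1 - 2 * P$i$i))
   - 2 * (\<Sum>j\<in>UNIV. (V$i$j)^2 * (e$j)^2 * (P$i$j)^2)"
  by (simp add: diagpart_eq I_minus_diagm I_minus_2diagm diagm_ent hadamard_ent VW_def Let_def dd_def;
      simp add: algebra_simps)

lemma Y_diag: "(((V ** diagm e) \<odot> (V ** diagm e)) ** (P \<odot> P)) $ i $ i = (\<Sum>j\<in>UNIV. (V$i$j)^2 * (e$j)^2 * (P$i$j)^2)"
  unfolding mm_ent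
proof (rule sum.cong[OF refl])
  fix k
  have "P$k$i = P$i$k" by (rule P_sym')
  thus "((V ** diagm e) \<odot> (V ** diagm e)) $ i $ k * (P \<odot> P) $ k $ i = (V$i$k)^2 * (e$k)^2 * (P$i$k)^2"
    by (simp add: hadamard_ent power2_eq_square)
qed

lemma Om_z: "OmegaLz e Z z1 z2 + OmegaHz e Z z1 z2 = (1 / real CARD('n)) * (\<Sum>i\<in>UNIV. \<Sum>j\<in>UNIV. z1$i * z2$j * Lm$i$j)"
proof -
  have "OmegaLz e Z z1 z2 + OmegaHz e Z z1 z2 = (1 / real CARD('n)) * (z1 \<bullet> (Lm *v z2))"
    unfolding OmegaLz_def OmegaHz_def Let_def
    by (simp only: matrix_vector_mult_add_rdistrib inner_add_right distrib_left)
  thus ?thesis by (simp only: bil)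
qed

lemma Om_a: "OmegaLa e Z a1 a2 + OmegaHa e Z a1 a2 = (1 / real CARD('n)) * (\<Sum>i\<in>UNIV. \<Sum>j\<in>UNIV. a1$i * a2$j * (AP$i$j - 2 * (AP ** AP)$i$j))"
  unfolding OmegaLa_def OmegaHa_def Let_def by (rule bil2)

lemma Om_u: "OmegaLu e Z SU + OmegaHu e Z SU = (1 / real CARD('n)) * (\<Sum>i\<in>UNIV. SU$i * Lm$i$i)"
proof -
  have a: "OmegaLu e Z SU = (1 / real CARD('n)) * (\<Sum>i\<in>UNIV. SU$i * (V$i$i * (1 - P$i$i)))"
    unfolding OmegaLu_def Let_def trace_def
    by (simp add: diagpart_eq I_minus_diagm diagm_ent dd_def mult.assoc)
  have b: "OmegaHu e Z SU = - (2 / real CARD('n)) * (\<Sum>i\<in>UNIV. SU$i * (V$i$i * P$i$i * (1 - 2 * P$i$i)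
      + (\<Sum>j\<in>UNIV. (V$i$j)^2 * (e$j)^2 * (P$i$j)^2)))"
    unfolding OmegaHu_def Let_def trace_def
    by (simp add: diagpart_eq I_minus_2diagm diagm_ent hadamard_ent mm_ent[of "diagm SU"] Y_diag[symmetric] dd_def mat1_ii del: Pmat_def Vmat_def)
  show ?thesis unfolding a b Lm_diag by (rule comb_u)
qed

end




theorem lemma2:
  fixes eps :: "real^'n"
    and Z :: "real^'k^'n"
    and Pi :: "real^'p^'k"
    and a :: "real^'p^'n"
    and M :: "'w measure"
    and u :: "'w \<Rightarrow> real^'p^'n"
  assumes inv: "invertible (transpose Z ** diagm eps ** diagm eps ** Z)"
    and M: "prob_space M"
    and u_meas: "\<And>i l. (\<lambda>w. u w $ i $ l) \<in> borel_measurable M"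
    and u_indep: "prob_space.indep_vars M (\<lambda>_. borel) (\<lambda>i w. u w $ i) UNIV"
    and u_sq: "\<And>i l. integrable M (\<lambda>w. (u w $ i $ l)^2)"
    and u_mean: "\<And>i l. prob_space.expectation M (\<lambda>w. u w $ i $ l) = 0"
  shows
    "(\<forall>l. measure_pmf.expectation rademacher_vec
            (\<lambda>r. prob_space.expectation M
               (\<lambda>w. S_rad eps Z (column l (Z ** Pi) + column l (u w)) (column l a) r)) = 0)
     \<and> (\<forall>l1 l2.
          (let SU = (\<chi> i. prob_space.expectation M (\<lambda>w. u w $ i $ l1 * u w $ i $ l2)
                         - prob_space.expectation M (\<lambda>w. u w $ i $ l1)
                           * prob_space.expectation M (\<lambda>w. u w $ i $ l2));
               zb1 = column l1 (Z ** Pi); zb2 = column l2 (Z ** Pi);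
               a1 = column l1 a; a2 = column l2 a in
           measure_pmf.expectation rademacher_vec
            (\<lambda>r. prob_space.expectation M
               (\<lambda>w. real CARD('n)
                     * S_rad eps Z (zb1 + column l1 (u w)) a1 r
                     * S_rad eps Z (zb2 + column l2 (u w)) a2 r))
           = (OmegaLz eps Z zb1 zb2 + OmegaLa eps Z a1 a2 + OmegaLu eps Z SU)
             + (OmegaHz eps Z zb1 zb2 + OmegaHa eps Z a1 a2 + OmegaHu eps Z SU)))"
proof -
  interpret iv: ivctx eps Z using inv by unfold_locales
  interpret ur: urv M u by (rule urv.intro[OF M u_meas u_indep u_sq u_mean])
  interpret prob_space M by (rule M)
  have c1: "measure_pmf.expectation rademacher_vec
            (\<lambda>r. prob_space.expectation M
               (\<lambda>w. S_rad eps Z (column l (Z ** Pi) + column l (u w)) (column l a) r)) = 0" for l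
  proof -
    have "\<And>r. prob_space.expectation M
               (\<lambda>w. S_rad eps Z (column l (Z ** Pi) + column l (u w)) (column l a) r)
          = S_rad eps Z (column l (Z ** Pi)) (column l a) r"
      unfolding iv.S_shift by (rule ur.lin_E)
    thus ?thesis unfolding rad_E by (simp add: iv.RE_S)
  qed
  have c2: "(let SU = (\<chi> i. prob_space.expectation M (\<lambda>w. u w $ i $ l1 * u w $ i $ l2)
                         - prob_space.expectation M (\<lambda>w. u w $ i $ l1)
                           * prob_space.expectation M (\<lambda>w. u w $ i $ l2));
               zb1 = column l1 (Z ** Pi); zb2 = column l2 (Z ** Pi);
               a1 = column l1 a; a2 = column l2 a in
           measure_pmf.expectation rademacher_vec
            (\<lambda>r. prob_space.expectation M
               (\<lambda>w. real CARD('n)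
                     * S_rad eps Z (zb1 + column l1 (u w)) a1 r
                     * S_rad eps Z (zb2 + column l2 (u w)) a2 r))
           = (OmegaLz eps Z zb1 zb2 + OmegaLa eps Z a1 a2 + OmegaLu eps Z SU)
             + (OmegaHz eps Z zb1 zb2 + OmegaHa eps Z a1 a2 + OmegaHu eps Z SU))" for l1 l2
  proof -
    define SU where "SU = (\<chi> i. prob_space.expectation M (\<lambda>w. u w $ i $ l1 * u w $ i $ l2)
                         - prob_space.expectation M (\<lambda>w. u w $ i $ l1)
                           * prob_space.expectation M (\<lambda>w. u w $ i $ l2))"
    define zb1 where "zb1 = column l1 (Z ** Pi)"
    define zb2 where "zb2 = column l2 (Z ** Pi)"
    define a1 where "a1 = column l1 a"
    define a2 where "a2 = column l2 a"
    define N where "N = real CARD('n)"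
    have N: "N \<noteq> 0" unfolding N_def by simp
    have SUj: "SU $ j = prob_space.expectation M (\<lambda>w. u w $ j $ l1 * u w $ j $ l2)" for j
      unfolding SU_def by (simp add: u_mean)
    have inner: "\<And>r. prob_space.expectation M
               (\<lambda>w. N * S_rad eps Z (zb1 + column l1 (u w)) a1 r * S_rad eps Z (zb2 + column l2 (u w)) a2 r)
         = N * S_rad eps Z zb1 a1 r * S_rad eps Z zb2 a2 r + (1/N) * (\<Sum>j\<in>UNIV. iv.cc j r * iv.cc j r * SU $ j)"
      unfolding iv.S_shift N_def[symmetric] SUj by (rule ur.quad_E[OF N])
    have "measure_pmf.expectation rademacher_vec
            (\<lambda>r. prob_space.expectation M
               (\<lambda>w. N * S_rad eps Z (zb1 + column l1 (u w)) a1 r * S_rad eps Z (zb2 + column l2 (u w)) a2 r))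
       = RE (\<lambda>r. N * S_rad eps Z zb1 a1 r * S_rad eps Z zb2 a2 r) + (1/N) * (\<Sum>j\<in>UNIV. RE (\<lambda>r. SU $ j * (iv.cc j r * iv.cc j r)))"
      unfolding rad_E inner by (simp only: RE_add RE_cmult RE_sum[OF finite_class.finite_UNIV] mult.commute[of _ "SU $ _"])
    also have "\<dots> = (1 / N) * (\<Sum>i\<in>UNIV. \<Sum>j\<in>UNIV. zb1$i * zb2$j * iv.Lm$i$j + a1$i * a2$j * (iv.AP$i$j - 2 * (iv.AP ** iv.AP)$i$j))
        + (1/N) * (\<Sum>j\<in>UNIV. SU $ j * iv.Lm$j$j)"
      unfolding N_def iv.RE_SS by (simp only: RE_cmult iv.EC)
    also have "\<dots> = (OmegaLz eps Z zb1 zb2 + OmegaHz eps Z zb1 zb2) + (OmegaLa eps Z a1 a2 + OmegaHa eps Z a1 a2)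
        + (OmegaLu eps Z SU + OmegaHu eps Z SU)"
      unfolding iv.Om_z iv.Om_a iv.Om_u N_def
      by (simp add: sum.distrib distrib_left)
    finally show ?thesis unfolding Let_def SU_def[symmetric] zb1_def[symmetric] zb2_def[symmetric]
       a1_def[symmetric] a2_def[symmetric] N_def[symmetric] by simp
  qed
  show ?thesis using c1 c2 by blast
qed


end
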